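(* Let $\mathcal A$ be a unital dual Banach algebra with predual $\mathcal A_*$, and let $T\in\mathcal B(\mathcal A,\mathcal A')=(\mathcal A\hat\otimes\mathcal A)'$. The following are equivalent: (a) $T\in\sigma WC(\mathcal B(\mathcal A,\mathcal A'))$; (b) $T(\mathcal A)\subseteq\kappa_{\mathcal A_*}(\mathcal A_* )$, $T'(\kappa_{\mathcal A}(\mathcal A))\subseteq\kappa_{\mathcal A_*}(\mathcal A_* )$, and $T\in\operatorname{WAP}(\mathcal B(\mathcal A,\mathcal A'))$. Moreover, each of these conditions implies that $T$ is weakly compact.
   Context: A dual Banach algebra: a Banach algebra $\mathcal A$ with closed subspace $\mathcal A_*\subseteq\mathcal A'$, a sub-bimodule of $\mathcal A'$ (actions $\langle a\cdot\mu,b\rangle=\mu(ba)$, $\langle\mu\cdot a,b\rangle=\mu(ab)$), such that the canonical map $\mathcal A\to(\mathcal A_* )'$ is a Banach space isomorphism; we identify $\mathcal A=(\mathcal A_* )'$, so $\mathcal A'=(\mathcal A_* )''$ and $\kappa_{\mathcal A_*}:\mathcal A_*\to\mathcal A'$ is the canonical embedding; $\kappa_{\mathcal A}:\mathcal A\to\mathcal A''$ likewise. $(\mathcal A\hat\otimes\mathcal A)'=\mathcal B(\mathcal A,\mathcal A')$ via $\langle T,a\otimes b\rangle=\langle T(b),a\rangle$, with bimodule actions $(a\cdot T)(c)=T(ca)$, $(T\cdot a)(c)=T(c)\cdot a$. $x\in\sigma WC(E)$ iff $a\mapsto a\cdot x$, $a\mapsto x\cdot a$ are $\sigma(\mathcal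 A,\mathcal A_* )$–weak continuous; $x\in\operatorname{WAP}(E)$ iff these maps are weakly compact. *)

theory Defs
  imports "HOL-Analysis.Analysis"
begin

definition weak_top :: "'x::real_normed_vector topology" where
  "weak_top = topology_generated_by
     {{x. blinfun_apply f x \<in> U} | (f :: 'x \<Rightarrow>\<^sub>L real) U. open U}"

text \<open>Weak-star topology sigma(A, A_*) on A, where the predual A_* is a subspace P of A'.\<close>
definition weak_star_top :: "('a::real_normed_vector \<Rightarrow>\<^sub>L real) set \<Rightarrow> 'a topology" where
  "weak_star_top P = topology_generated_by
     {{a. blinfun_apply \<mu> a \<in> U} | \<mu> U. \<mu> \<in> P \<and> open U}"

definition weakly_compact_map :: "('x::real_normed_vector \<Rightarrow> 'y::real_normed_vector) \<Rightarrow> bool" where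
  "weakly_compact_map L \<longleftrightarrow>
     compactin weak_top (weak_top closure_of (L ` cball 0 1))"

definition lact :: "'a::real_normed_algebra \<Rightarrow> ('a \<Rightarrow>\<^sub>L real) \<Rightarrow> ('a \<Rightarrow>\<^sub>L real)" where
  "lact a \<mu> = Blinfun (\<lambda>b. blinfun_apply \<mu> (b * a))"

definition ract :: "('a::real_normed_algebra \<Rightarrow>\<^sub>L real) \<Rightarrow> 'a \<Rightarrow> ('a \<Rightarrow>\<^sub>L real)" where
  "ract \<mu> a = Blinfun (\<lambda>b. blinfun_apply \<mu> (a * b))"

definition blact :: "'a::real_normed_algebra \<Rightarrow> ('a \<Rightarrow>\<^sub>L ('a \<Rightarrow>\<^sub>L real)) \<Rightarrow> ('a \<Rightarrow>\<^sub>L ('a \<Rightarrow>\<^sub>L real))" where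
  "blact a T = Blinfun (\<lambda>c. blinfun_apply T (c * a))"

definition bract :: "('a::real_normed_algebra \<Rightarrow>\<^sub>L ('a \<Rightarrow>\<^sub>L real)) \<Rightarrow> 'a \<Rightarrow> ('a \<Rightarrow>\<^sub>L ('a \<Rightarrow>\<^sub>L real))" where
  "bract T a = Blinfun (\<lambda>c. ract (blinfun_apply T c) a)"

text \<open>Dual Banach algebra with predual P (a closed sub-bimodule of A') such that the canonical
  map A \<rightarrow> P', a \<mapsto> (\<mu> \<mapsto> \<mu> a), is a Banach space isomorphism
  (it is automatically linear and bounded; we require it to be onto and bounded below).\<close>
definition dual_banach_algebra :: "('a::{real_normed_algebra,banach} \<Rightarrow>\<^sub>L real) set \<Rightarrow> bool" where
  "dual_banach_algebra P \<longleftrightarrow>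
     subspace P \<and> closed P \<and>
     (\<forall>\<mu>\<in>P. \<forall>a. lact a \<mu> \<in> P \<and> ract \<mu> a \<in> P) \<and>
     (\<forall>\<phi> :: ('a \<Rightarrow>\<^sub>L real) \<Rightarrow> real.
        (\<forall>\<mu>\<in>P. \<forall>\<nu>\<in>P. \<phi> (\<mu> + \<nu>) = \<phi> \<mu> + \<phi> \<nu>) \<and>
        (\<forall>\<mu>\<in>P. \<forall>c. \<phi> (c *\<^sub>R \<mu>) = c * \<phi> \<mu>) \<and>
        (\<exists>C. \<forall>\<mu>\<in>P. \<bar>\<phi> \<mu>\<bar> \<le> C * norm \<mu>)
        \<longrightarrow> (\<exists>a. \<forall>\<mu>\<in>P. \<phi> \<mu> = blinfun_apply \<mu> a)) \<and>
     (\<exists>c>0. \<forall>a. norm a \<le> c * Sup {\<bar>blinfun_apply \<mu> a\<bar> | \<mu>. \<mu> \<in> P \<and> norm \<mu> \<le> 1})"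

definition sigmaWC :: "('a::{real_normed_algebra,banach} \<Rightarrow>\<^sub>L real) set \<Rightarrow> ('a \<Rightarrow>\<^sub>L ('a \<Rightarrow>\<^sub>L real)) \<Rightarrow> bool" where
  "sigmaWC P T \<longleftrightarrow>
     continuous_map (weak_star_top P) weak_top (\<lambda>a. blact a T) \<and>
     continuous_map (weak_star_top P) weak_top (\<lambda>a. bract T a)"

definition WAP :: "('a \<Rightarrow>\<^sub>L ('a::{real_normed_algebra,banach} \<Rightarrow>\<^sub>L real)) \<Rightarrow> bool" where
  "WAP T \<longleftrightarrow> weakly_compact_map (\<lambda>a. blact a T) \<and> weakly_compact_map (\<lambda>a. bract T a)"

end

theory Submission
  imports Defs
begin

definition wtop :: "('x \<Rightarrow> real) set \<Rightarrow> 'x topology" where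
  "wtop F = topology_generated_by {{x. f x \<in> U} | f U. f \<in> F \<and> open U}"

lemma weak_top_wtop: "weak_top = wtop (range blinfun_apply)"
  unfolding weak_top_def wtop_def by (rule arg_cong[where f=topology_generated_by]) auto

lemma weak_star_wtop: "weak_star_top P = wtop (blinfun_apply ` P)"
  unfolding weak_star_top_def wtop_def by (rule arg_cong[where f=topology_generated_by]) auto

lemma wtop_topspace: "F \<noteq> {} \<Longrightarrow> topspace (wtop F) = UNIV"
  unfolding wtop_def topology_generated_by_topspace
proof -
  assume "F \<noteq> {}" then obtain f where "f \<in> F" by auto
  then have "UNIV \<in> {{x. f x \<in> U} | f U. f \<in> F \<and> open U}" by (intro CollectI exI[of _ f] exI[of _ UNIV]) auto
  then show "\<Union> {{x. f x \<in> U} | f U. f \<in> F \<and> open U} = UNIV" by blast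
qed

lemma wtop_cont: "f \<in> F \<Longrightarrow> continuous_map (wtop F) euclideanreal f"
  unfolding continuous_map_def
proof (intro conjI allI impI)
  assume f: "f \<in> F"
  then have ne: "F \<noteq> {}" by auto
  show "f \<in> topspace (wtop F) \<rightarrow> topspace euclideanreal" by auto
  fix U assume "openin euclideanreal U"
  then have "open U" by simp
  then have "openin (wtop F) {x. f x \<in> U}" unfolding wtop_def
    by (intro topology_generated_by_Basis) (use f in auto)
  then show "openin (wtop F) {x \<in> topspace (wtop F). f x \<in> U}" using wtop_topspace[OF ne] by simp
qed

lemma wtop_cont_into:
  assumes "F \<noteq> {}" "\<And>f. f \<in> F \<Longrightarrow> continuous_map X euclideanreal (f \<circ> g)"
  shows "continuous_map X (wtop F) g"
  unfolding wtop_def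
proof (rule continuous_on_generated_topo)
  fix V assume "V \<in> {{x. f x \<in> U} | f U. f \<in> F \<and> open U}"
  then obtain f U where V: "V = {x. f x \<in> U}" "f \<in> F" "open U" by auto
  have "openin X {x \<in> topspace X. (f \<circ> g) x \<in> U}"
    using assms(2)[OF V(2)] V(3) by (simp add: continuous_map_def)
  moreover have "{x \<in> topspace X. (f \<circ> g) x \<in> U} = g -` V \<inter> topspace X" using V by auto
  ultimately show "openin X (g -` V \<inter> topspace X)" by simp
next
  show "g ` topspace X \<subseteq> \<Union> {{x. f x \<in> U} | f U. f \<in> F \<and> open U}"
    using wtop_topspace[OF assms(1)] unfolding wtop_def by simp
qed

lemma wtop_Hausdorff:
  assumes sep: "\<And>x y. x \<noteq> y \<Longrightarrow> \<exists>f\<in>F. f x \<noteq> f y"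
  shows "Hausdorff_space (wtop F)"
  unfolding Hausdorff_space_def
proof (intro allI impI)
  fix x y assume "x \<in> topspace (wtop F) \<and> y \<in> topspace (wtop F) \<and> x \<noteq> y"
  then obtain f where f: "f \<in> F" "f x \<noteq> f y" using sep by blast
  define r where "r = dist (f x) (f y) / 2"
  have r: "r > 0" using f(2) by (simp add: r_def)
  define U where "U = ball (f x) r"
  define V where "V = ball (f y) r"
  have UV: "open U" "open V" "f x \<in> U" "f y \<in> V" "disjnt U V"
    unfolding U_def V_def disjnt_def using r
    by (auto simp: r_def dist_commute) (smt (verit) dist_triangle dist_commute)
  have "openin (wtop F) {z. f z \<in> U}" "openin (wtop F) {z. f z \<in> V}"
    unfolding wtop_def by (intro topology_generated_by_Basis, use f UV in auto)+
  moreover have "disjnt {z. f z \<in> U} {z. f z \<in> V}" using UV(5) by (auto simp: disjnt_def)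
  ultimately show "\<exists>U V. openin (wtop F) U \<and> openin (wtop F) V \<and> x \<in> U \<and> y \<in> V \<and> disjnt U V"
    using UV by blast
qed

lemma wtop_nhd:
  assumes "openin (wtop F) U" "x \<in> U"
  shows "\<exists>G. finite G \<and> G \<subseteq> F \<and> (\<exists>d>0. \<forall>y. (\<forall>f\<in>G. \<bar>f y - f x\<bar> < d) \<longrightarrow> y \<in> U)"
proof -
  have "generate_topology_on {{x. f x \<in> U} | f U. f \<in> F \<and> open U} U"
    using assms(1) unfolding wtop_def by (rule openin_topology_generated_by)
  then show ?thesis using assms(2)
  proof (induction arbitrary: x)
    case Empty then show ?case by simp
  next
    case (Int a b)
    from Int.prems have xa: "x \<in> a" and xb: "x \<in> b" by auto
    obtain G1 d1 where 1: "finite G1" "G1 \<subseteq> F" "d1 > 0" "\<forall>y. (\<forall>f\<in>G1. \<bar>f y - f x\<bar> < d1) \<longrightarrow> y \<in> a"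
      using Int.IH(1)[OF xa] by blast
    obtain G2 d2 where 2: "finite G2" "G2 \<subseteq> F" "d2 > 0" "\<forall>y. (\<forall>f\<in>G2. \<bar>f y - f x\<bar> < d2) \<longrightarrow> y \<in> b"
      using Int.IH(2)[OF xb] by blast
    have "\<forall>y. (\<forall>f\<in>G1 \<union> G2. \<bar>f y - f x\<bar> < min d1 d2) \<longrightarrow> y \<in> a \<inter> b"
    proof (intro allI impI)
      fix y assume H: "\<forall>f\<in>G1 \<union> G2. \<bar>f y - f x\<bar> < min d1 d2"
      have "y \<in> a" using 1(4) H by simp
      moreover have "y \<in> b" using 2(4) H by simp
      ultimately show "y \<in> a \<inter> b" by simp
    qed
    moreover have "min d1 d2 > 0" using 1(3) 2(3) by simp
    moreover have "finite (G1 \<union> G2)" "G1 \<union> G2 \<subseteq> F" using 1(1,2) 2(1,2) by auto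
    ultimately show ?case by blast
  next
    case (UN K)
    from UN.prems obtain k where k: "k \<in> K" "x \<in> k" by blast
    obtain G d where G: "finite G" "G \<subseteq> F" "d > 0" "\<forall>y. (\<forall>f\<in>G. \<bar>f y - f x\<bar> < d) \<longrightarrow> y \<in> k"
      using UN.IH[OF k] by blast
    have "\<forall>y. (\<forall>f\<in>G. \<bar>f y - f x\<bar> < d) \<longrightarrow> y \<in> \<Union>K" using G(4) k(1) by blast
    then show ?case using G(1-3) by blast
  next
    case (Basis s)
    then obtain f V where s: "s = {x. f x \<in> V}" "f \<in> F" "open V" by auto
    have "f x \<in> V" using Basis.prems s(1) by simp
    then obtain e where e: "e > 0" "ball (f x) e \<subseteq> V" using s(3) openE by blast
    have "\<forall>y. (\<forall>g\<in>{f}. \<bar>g y - g x\<bar> < e) \<longrightarrow> y \<in> s"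
    proof (intro allI impI)
      fix y assume "\<forall>g\<in>{f}. \<bar>g y - g x\<bar> < e"
      then have "f y \<in> ball (f x) e" by (simp add: dist_real_def abs_minus_commute)
      then show "y \<in> s" using e(2) s(1) by auto
    qed
    moreover have "finite {f}" "{f} \<subseteq> F" using s(2) by auto
    ultimately show ?case using e(1) by blast
  qed
qed

lemma wtop_coarser:
  assumes "G \<subseteq> F" "G \<noteq> {}" "openin (wtop G) U"
  shows "openin (wtop F) U"
proof -
  have "continuous_map (wtop F) (wtop G) id"
    by (rule wtop_cont_into, use assms in \<open>auto intro: wtop_cont\<close>)
  then have "openin (wtop F) {x \<in> topspace (wtop F). id x \<in> U}"
    using assms(3) by (simp add: continuous_map_def)
  moreover have "F \<noteq> {}" using assms by auto
  then have "topspace (wtop F) = UNIV" by (rule wtop_topspace)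
  ultimately show ?thesis by simp
qed

lemma subspace_ker:
  fixes g :: "'a::real_vector \<Rightarrow> real"
  assumes "linear g" "subspace M"
  shows "subspace (M \<inter> {x. g x = 0})"
proof -
  have "subspace {x. g x = (0::real)}"
    unfolding subspace_def using assms(1)
    by (auto simp: linear_0 linear_add linear_scale)
  then show ?thesis using assms(2) by (rule subspace_inter[rotated])
qed

lemma linear_comb:
  fixes g :: "'i \<Rightarrow> 'a::real_vector \<Rightarrow> real"
  assumes "linear f" "\<And>i. i \<in> I \<Longrightarrow> linear (g i)"
  shows "linear (\<lambda>x. f x - (\<Sum>i\<in>I. c i * g i x))"
  unfolding linear_iff
proof (intro conjI allI)
  fix x y
  show "f (x + y) - (\<Sum>i\<in>I. c i * g i (x + y)) = f x - (\<Sum>i\<in>I. c i * g i x) + (f y - (\<Sum>i\<in>I. c i * g i y))"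
    using assms by (simp add: linear_add distrib_left sum.distrib)
next
  fix r x
  have "(\<Sum>i\<in>I. c i * g i (r *\<^sub>R x)) = r * (\<Sum>i\<in>I. c i * g i x)"
    using assms(2) by (simp add: linear_scale sum_distrib_left mult.left_commute)
  then show "f (r *\<^sub>R x) - (\<Sum>i\<in>I. c i * g i (r *\<^sub>R x)) = r *\<^sub>R (f x - (\<Sum>i\<in>I. c i * g i x))"
    using assms(1) by (simp add: linear_scale right_diff_distrib)
qed

lemma LA:
  fixes g :: "'i \<Rightarrow> 'a::real_vector \<Rightarrow> real"
  assumes fin: "finite I" and lg: "\<And>i. i \<in> I \<Longrightarrow> linear (g i)" and lf: "linear f"
  shows "subspace M \<Longrightarrow> (\<And>x. x \<in> M \<Longrightarrow> \<forall>i\<in>I. g i x = 0 \<Longrightarrow> f x = 0)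
     \<Longrightarrow> \<exists>c. \<forall>x\<in>M. f x = (\<Sum>i\<in>I. c i * g i x)"
proof -
  have "\<forall>M. (\<forall>i\<in>I. linear (g i)) \<longrightarrow> subspace M \<longrightarrow> (\<forall>x\<in>M. (\<forall>i\<in>I. g i x = 0) \<longrightarrow> f x = 0)
     \<longrightarrow> (\<exists>c. \<forall>x\<in>M. f x = (\<Sum>i\<in>I. c i * g i x))"
    using fin
  proof (induction I rule: finite_induct)
    case empty
    then show ?case by auto
  next
    case (insert j I)
    show ?case
    proof (intro allI impI)
    fix M assume lins: "\<forall>i\<in>insert j I. linear (g i)" and sM: "subspace M"
      and hM: "\<forall>x\<in>M. (\<forall>i\<in>insert j I. g i x = 0) \<longrightarrow> f x = 0"
  have gj: "linear (g j)" using lins by simp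
  define M' where "M' = M \<inter> {x. g j x = 0}"
  have sM': "subspace M'" unfolding M'_def by (rule subspace_ker[OF gj sM])
  have "\<exists>c. \<forall>x\<in>M'. f x = (\<Sum>i\<in>I. c i * g i x)"
    using insert.IH lins sM' hM unfolding M'_def by auto
  then obtain c where c: "\<forall>x\<in>M'. f x = (\<Sum>i\<in>I. c i * g i x)" by blast
  define \<phi> where "\<phi> x = f x - (\<Sum>i\<in>I. c i * g i x)" for x
  have lphi: "linear \<phi>" unfolding \<phi>_def[abs_def]
    by (rule linear_comb[OF lf]) (use lins in simp)
  have phi0: "\<phi> x = 0" if "x \<in> M'" for x using c that by (simp add: \<phi>_def)
  obtain d where d: "\<forall>x\<in>M. \<phi> x = d * g j x"
  proof (cases "\<exists>x0\<in>M. g j x0 \<noteq> 0")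
    case True
    then obtain x0 where x0: "x0 \<in> M" "g j x0 \<noteq> 0" by blast
    have "\<phi> x = (\<phi> x0 / g j x0) * g j x" if xM: "x \<in> M" for x
    proof -
      define y where "y = x - (g j x / g j x0) *\<^sub>R x0"
      have "y \<in> M" unfolding y_def using sM xM x0(1)
        by (intro subspace_diff subspace_scale) auto
      moreover have "g j y = 0" unfolding y_def using x0(2) gj by (simp add: linear_diff linear_scale)
      ultimately have "\<phi> y = 0" using phi0 unfolding M'_def by simp
      moreover have "\<phi> y = \<phi> x - (g j x / g j x0) * \<phi> x0" unfolding y_def using lphi by (simp add: linear_diff linear_scale)
      ultimately show ?thesis by simp
    qed
    then show ?thesis using that by blast
  next
    case False
    then have "\<forall>x\<in>M. \<phi> x = 0 * g j x" using phi0 unfolding M'_def by auto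
    then show ?thesis using that by blast
  qed
  define c' where "c' = c(j := d)"
  have "\<forall>x\<in>M. f x = (\<Sum>i\<in>insert j I. c' i * g i x)"
  proof
    fix x assume "x \<in> M"
    have "(\<Sum>i\<in>I. c' i * g i x) = (\<Sum>i\<in>I. c i * g i x)"
      using insert.hyps(2) unfolding c'_def by (intro sum.cong) auto
    then show "f x = (\<Sum>i\<in>insert j I. c' i * g i x)"
    proof -
      have "f x - (\<Sum>i\<in>I. c i * g i x) = d * g j x" using d \<open>x \<in> M\<close> unfolding \<phi>_def by blast
      then show ?thesis using insert.hyps \<open>(\<Sum>i\<in>I. c' i * g i x) = (\<Sum>i\<in>I. c i * g i x)\<close>
        unfolding c'_def by simp
    qed
  qed
  then show "\<exists>c. \<forall>x\<in>M. f x = (\<Sum>i\<in>insert j I. c i * g i x)" by blast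
  qed
  qed
  then show "subspace M \<Longrightarrow> (\<And>x. x \<in> M \<Longrightarrow> \<forall>i\<in>I. g i x = 0 \<Longrightarrow> f x = 0)
     \<Longrightarrow> \<exists>c. \<forall>x\<in>M. f x = (\<Sum>i\<in>I. c i * g i x)" using lg by blast
qed

lemma HB1:
  fixes h :: "'a::real_normed_vector \<Rightarrow> real"
  assumes e0: "e \<ge> 0" and L: "subspace L" and lh: "linear h" and hb: "\<And>y. y \<in> L \<Longrightarrow> \<bar>h y\<bar> \<le> e * norm y"
  shows "\<exists>t. \<forall>y\<in>L. \<forall>s. \<bar>h y + s * t\<bar> \<le> e * norm (y + s *\<^sub>R x0)"
proof -
  have key: "h y + h z \<le> e * norm (y - x0) + e * norm (z + x0)" if "y \<in> L" "z \<in> L" for y z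
  proof -
    have "y + z \<in> L" using L that by (rule subspace_add)
    have "h y + h z = h (y + z)" using lh by (simp add: linear_add)
    also have "\<dots> \<le> e * norm (y + z)" using hb[OF \<open>y + z \<in> L\<close>] by simp
    also have "norm (y + z) \<le> norm (y - x0) + norm (z + x0)"
      using norm_triangle_ineq[of "y - x0" "z + x0"] by simp
    then have "e * norm (y + z) \<le> e * (norm (y - x0) + norm (z + x0))" using e0 by (rule mult_left_mono)
    finally show ?thesis by (simp add: distrib_left)
  qed
  define S where "S = {h y - e * norm (y - x0) | y. y \<in> L}"
  have Sne: "S \<noteq> {}" using subspace_0[OF L] unfolding S_def by blast
  have Sb: "bdd_above S"
  proof (rule bdd_aboveI)
    fix u assume "u \<in> S"
    then obtain y where "y \<in> L" "u = h y - e * norm (y - x0)" unfolding S_def by blast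
    then show "u \<le> e * norm (0 + x0) - h 0" using key[of y 0] subspace_0[OF L] by simp
  qed
  define t where "t = Sup S"
  have A: "h y - t \<le> e * norm (y - x0)" if "y \<in> L" for y
  proof -
    have "h y - e * norm (y - x0) \<in> S" using that unfolding S_def by blast
    then have "h y - e * norm (y - x0) \<le> t" unfolding t_def using Sb by (rule cSup_upper)
    then show ?thesis by simp
  qed
  have B: "h z + t \<le> e * norm (z + x0)" if "z \<in> L" for z
  proof -
    have "t \<le> e * norm (z + x0) - h z" unfolding t_def
    proof (rule cSup_least[OF Sne])
      fix u assume "u \<in> S"
      then obtain y where "y \<in> L" "u = h y - e * norm (y - x0)" unfolding S_def by blast
      then show "u \<le> e * norm (z + x0) - h z" using key[of y z] that by simp
    qed
    then show ?thesis by simp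
  qed
  have C: "h y + s * t \<le> e * norm (y + s *\<^sub>R x0) \<and> h y - s * t \<le> e * norm (y - s *\<^sub>R x0)"
    if "y \<in> L" "s > 0" for y s
  proof -
    define w where "w = (1 / s) *\<^sub>R y"
    have w: "w \<in> L" unfolding w_def using L that(1) by (rule subspace_scale)
    have yw: "y = s *\<^sub>R w" unfolding w_def using that(2) by simp
    have hy: "h y = s * h w" unfolding yw using lh by (simp add: linear_scale)
    have e1: "y + s *\<^sub>R x0 = s *\<^sub>R (w + x0)" unfolding yw by (simp add: scaleR_add_right)
    have e2: "y - s *\<^sub>R x0 = s *\<^sub>R (w - x0)" unfolding yw by (simp add: scaleR_diff_right)
    have n1: "norm (y + s *\<^sub>R x0) = s * norm (w + x0)" unfolding e1 using that(2) by simp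
    have n2: "norm (y - s *\<^sub>R x0) = s * norm (w - x0)" unfolding e2 using that(2) by simp
    have "s * (h w + t) \<le> s * (e * norm (w + x0))" using B[OF w] that(2) by simp
    moreover have "s * (h w - t) \<le> s * (e * norm (w - x0))" using A[OF w] that(2) by simp
    ultimately show ?thesis unfolding hy n1 n2 by (simp add: algebra_simps)
  qed
  have "\<bar>h y + s * t\<bar> \<le> e * norm (y + s *\<^sub>R x0)" if y: "y \<in> L" for y s
  proof -
    have my: "- y \<in> L" using L y by (rule subspace_neg)
    have hm: "h (- y) = - h y" using lh by (rule linear_neg)
    consider "s = 0" | "s > 0" | "s < 0" by linarith
    then show ?thesis
    proof cases
      case 1 then show ?thesis using hb[OF y] by simp
    next
      case 2
      have "h y + s * t \<le> e * norm (y + s *\<^sub>R x0)" using C[OF y 2] by simp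
      moreover have "h (- y) - s * t \<le> e * norm (- y - s *\<^sub>R x0)" using C[OF my 2] by simp
      moreover have "norm (- y - s *\<^sub>R x0) = norm (y + s *\<^sub>R x0)"
        by (metis norm_minus_cancel minus_add_distrib diff_conv_add_uminus)
      ultimately show ?thesis using hm by (simp add: abs_le_iff)
    next
      case 3
      define r where "r = - s"
      have r: "r > 0" using 3 by (simp add: r_def)
      have "h y - r * t \<le> e * norm (y - r *\<^sub>R x0)" using C[OF y r] by simp
      moreover have "h (- y) + r * t \<le> e * norm (- y + r *\<^sub>R x0)" using C[OF my r] by simp
      moreover have "norm (- y + r *\<^sub>R x0) = norm (y - r *\<^sub>R x0)"
        by (metis norm_minus_cancel minus_diff_eq uminus_add_conv_diff)
      moreover have "y - r *\<^sub>R x0 = y + s *\<^sub>R x0" unfolding r_def by simp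
      ultimately show ?thesis using hm unfolding r_def by (simp add: abs_le_iff)
    qed
  qed
  then show ?thesis by blast
qed

lemma linear_sub_fun:
  fixes f g :: "'a::real_vector \<Rightarrow> real"
  assumes "linear f" "linear g"
  shows "linear (\<lambda>x. f x - g x)"
  unfolding linear_iff using assms by (simp add: linear_add linear_scale algebra_simps)

lemma HBF:
  fixes g :: "'i \<Rightarrow> 'a::real_normed_vector \<Rightarrow> real"
  assumes fin: "finite I" and lg: "\<And>i. i \<in> I \<Longrightarrow> linear (g i)" and e0: "e \<ge> 0"
  shows "\<forall>M f. subspace M \<longrightarrow> linear f \<longrightarrow> (\<forall>x\<in>M. (\<forall>i\<in>I. g i x = 0) \<longrightarrow> \<bar>f x\<bar> \<le> e * norm x)
    \<longrightarrow> (\<exists>h. linear h \<and> (\<forall>x\<in>M. \<bar>h x\<bar> \<le> e * norm x) \<and> (\<forall>x\<in>M. (\<forall>i\<in>I. g i x = 0) \<longrightarrow> h x = f x))"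
  using fin lg
proof (induction I rule: finite_induct)
  case empty
  show ?case
  proof (intro allI impI)
    fix M and f :: "'a \<Rightarrow> real"
    assume "linear f" "\<forall>x\<in>M. (\<forall>i\<in>{}. g i x = 0) \<longrightarrow> \<bar>f x\<bar> \<le> e * norm x"
    then show "\<exists>h. linear h \<and> (\<forall>x\<in>M. \<bar>h x\<bar> \<le> e * norm x) \<and> (\<forall>x\<in>M. (\<forall>i\<in>{}. g i x = 0) \<longrightarrow> h x = f x)"
      by (intro exI[of _ f]) simp
  qed
next
  case (insert j I)
  have lI: "\<And>i. i \<in> I \<Longrightarrow> linear (g i)" using insert.prems by simp
  have gj: "linear (g j)" using insert.prems by simp
  note IH = insert.IH[OF lI]
  show ?case
  proof (intro allI impI)
    fix M and f :: "'a \<Rightarrow> real"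
    assume sM: "subspace M" and lf: "linear f"
      and hyp: "\<forall>x\<in>M. (\<forall>i\<in>insert j I. g i x = 0) \<longrightarrow> \<bar>f x\<bar> \<le> e * norm x"
    define M' where "M' = M \<inter> {x. g j x = 0}"
    have sM': "subspace M'" unfolding M'_def by (rule subspace_ker[OF gj sM])
    have hyp': "\<forall>x\<in>M'. (\<forall>i\<in>I. g i x = 0) \<longrightarrow> \<bar>f x\<bar> \<le> e * norm x"
      using hyp unfolding M'_def by auto
    obtain h' where lh': "linear h'" and bnd': "\<forall>x\<in>M'. \<bar>h' x\<bar> \<le> e * norm x"
      and agr': "\<forall>x\<in>M'. (\<forall>i\<in>I. g i x = 0) \<longrightarrow> h' x = f x"
      using IH sM' lf hyp' by blast
    show "\<exists>h. linear h \<and> (\<forall>x\<in>M. \<bar>h x\<bar> \<le> e * norm x) \<and> (\<forall>x\<in>M. (\<forall>i\<in>insert j I. g i x = 0) \<longrightarrow> h x = f x)"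
    proof (cases "\<exists>x0\<in>M. g j x0 \<noteq> 0")
      case True
      then obtain x0 where x0: "x0 \<in> M" "g j x0 \<noteq> 0" by blast
      define x1 where "x1 = (1 / g j x0) *\<^sub>R x0"
      have x1M: "x1 \<in> M" unfolding x1_def using sM x0(1) by (rule subspace_scale)
      have gx1: "g j x1 = 1" unfolding x1_def using x0(2) gj by (simp add: linear_scale)
      obtain t where t: "\<forall>y\<in>M'. \<forall>s. \<bar>h' y + s * t\<bar> \<le> e * norm (y + s *\<^sub>R x1)"
        using HB1[OF e0 sM' lh', of x1] bnd' by blast
      define h where "h x = h' (x - g j x *\<^sub>R x1) + g j x * t" for x
      have lh: "linear h"
        unfolding linear_iff
      proof (intro conjI allI)
        fix x y
        have eq: "x + y - g j (x + y) *\<^sub>R x1 = (x - g j x *\<^sub>R x1) + (y - g j y *\<^sub>R x1)"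
          using gj by (simp add: linear_add scaleR_add_left algebra_simps)
        have "h' (x + y - g j (x + y) *\<^sub>R x1) = h' (x - g j x *\<^sub>R x1) + h' (y - g j y *\<^sub>R x1)"
          unfolding eq by (rule linear_add[OF lh'])
        then show "h (x + y) = h x + h y" unfolding h_def using gj
          by (simp add: linear_add algebra_simps)
      next
        fix r x
        have eq: "r *\<^sub>R x - g j (r *\<^sub>R x) *\<^sub>R x1 = r *\<^sub>R (x - g j x *\<^sub>R x1)"
          using gj by (simp add: linear_scale scaleR_diff_right)
        have "h' (r *\<^sub>R x - g j (r *\<^sub>R x) *\<^sub>R x1) = r *\<^sub>R h' (x - g j x *\<^sub>R x1)"
          unfolding eq by (rule linear_scale[OF lh'])
        then show "h (r *\<^sub>R x) = r *\<^sub>R h x" unfolding h_def using gj lh'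
          by (simp add: linear_scale algebra_simps)
      qed
      have "\<forall>x\<in>M. \<bar>h x\<bar> \<le> e * norm x"
      proof
        fix x assume xM: "x \<in> M"
        define y where "y = x - g j x *\<^sub>R x1"
        have "y \<in> M" unfolding y_def using sM xM x1M by (intro subspace_diff subspace_scale) auto
        moreover have "g j y = 0" unfolding y_def using gj gx1 by (simp add: linear_diff linear_scale)
        ultimately have yM': "y \<in> M'" unfolding M'_def by simp
        have "x = y + g j x *\<^sub>R x1" unfolding y_def by simp
        then have "norm x = norm (y + g j x *\<^sub>R x1)" by simp
        moreover have "h x = h' y + g j x * t" unfolding h_def y_def by simp
        ultimately show "\<bar>h x\<bar> \<le> e * norm x" using t yM' by simp
      qed
      moreover have "\<forall>x\<in>M. (\<forall>i\<in>insert j I. g i x = 0) \<longrightarrow> h x = f x"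
      proof (intro ballI impI)
        fix x assume xM: "x \<in> M" and z: "\<forall>i\<in>insert j I. g i x = 0"
        then have "x \<in> M'" unfolding M'_def by simp
        then show "h x = f x" using agr' z unfolding h_def by simp
      qed
      ultimately show ?thesis using lh by blast
    next
      case False
      then have MM: "\<forall>x\<in>M. x \<in> M'" unfolding M'_def by auto
      have "\<forall>x\<in>M. \<bar>h' x\<bar> \<le> e * norm x" using MM bnd' by blast
      moreover have "\<forall>x\<in>M. (\<forall>i\<in>insert j I. g i x = 0) \<longrightarrow> h' x = f x" using MM agr' by simp
      ultimately show ?thesis using lh' by blast
    qed
  qed
qed

lemma BD:
  fixes P :: "('a::real_normed_vector \<Rightarrow>\<^sub>L real) set" and \<psi> :: "'a \<Rightarrow>\<^sub>L real"
  assumes sP: "subspace P" and cP: "closed P"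
    and H: "\<And>e. e > 0 \<Longrightarrow> \<exists>F. finite F \<and> F \<subseteq> P \<and> (\<exists>d>0. \<forall>a. norm a \<le> 1 \<longrightarrow> (\<forall>\<mu>\<in>F. \<bar>\<mu> a\<bar> < d) \<longrightarrow> \<bar>\<psi> a\<bar> < e)"
  shows "\<psi> \<in> P"
proof -
  have "\<exists>\<nu>\<in>P. dist \<nu> \<psi> < e" if e: "e > 0" for e
  proof -
    obtain F d where F: "finite F" "F \<subseteq> P" "d > 0"
      and Fd: "\<forall>a. norm a \<le> 1 \<longrightarrow> (\<forall>\<mu>\<in>F. \<bar>\<mu> a\<bar> < d) \<longrightarrow> \<bar>\<psi> a\<bar> < e / 2"
      using H[of "e/2"] e by auto
    have bnd: "\<forall>x\<in>UNIV. (\<forall>\<mu>\<in>F. \<mu> x = 0) \<longrightarrow> \<bar>\<psi> x\<bar> \<le> (e/2) * norm x"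
    proof (intro ballI impI)
      fix x :: 'a assume z: "\<forall>\<mu>\<in>F. \<mu> x = 0"
      show "\<bar>\<psi> x\<bar> \<le> (e/2) * norm x"
      proof (cases "x = 0")
        case True then show ?thesis by (simp add: blinfun.zero_right)
      next
        case False
        define a where "a = (1 / norm x) *\<^sub>R x"
        have na: "norm a = 1" unfolding a_def using False by simp
        have "\<forall>\<mu>\<in>F. \<bar>\<mu> a\<bar> < d" unfolding a_def using z F(3) by (simp add: blinfun.scaleR_right)
        then have "\<bar>\<psi> a\<bar> < e / 2" using Fd na by simp
        moreover have "\<psi> x = norm x * \<psi> a" unfolding a_def using False by (simp add: blinfun.scaleR_right)
        ultimately have "\<bar>\<psi> x\<bar> = norm x * \<bar>\<psi> a\<bar>" "\<bar>\<psi> a\<bar> \<le> e / 2"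
          by (simp_all add: abs_mult)
        then have "\<bar>\<psi> x\<bar> \<le> norm x * (e / 2)"
          using mult_left_mono[OF \<open>\<bar>\<psi> a\<bar> \<le> e / 2\<close> norm_ge_zero[of x]] by simp
        then show ?thesis by (simp add: mult.commute)
      qed
    qed
    have lF: "\<And>\<mu>. \<mu> \<in> F \<Longrightarrow> linear (blinfun_apply \<mu>)" by (rule bounded_linear.linear[OF blinfun.bounded_linear_right])
    have lpsi: "linear (blinfun_apply \<psi>)" by (rule bounded_linear.linear[OF blinfun.bounded_linear_right])
    have H0: "\<forall>M f. subspace M \<longrightarrow> linear f \<longrightarrow> (\<forall>x\<in>M. (\<forall>\<mu>\<in>F. blinfun_apply \<mu> x = 0) \<longrightarrow> \<bar>f x\<bar> \<le> (e/2) * norm x)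
      \<longrightarrow> (\<exists>h. linear h \<and> (\<forall>x\<in>M. \<bar>h x\<bar> \<le> (e/2) * norm x) \<and> (\<forall>x\<in>M. (\<forall>\<mu>\<in>F. blinfun_apply \<mu> x = 0) \<longrightarrow> h x = f x))"
      using HBF[OF F(1) lF, where e="e/2"] e by simp
    obtain h where lh: "linear h" and hb: "\<forall>x\<in>UNIV. \<bar>h x\<bar> \<le> (e/2) * norm x"
      and ha: "\<forall>x\<in>UNIV. (\<forall>\<mu>\<in>F. \<mu> x = 0) \<longrightarrow> h x = \<psi> x"
      using mp[OF mp[OF mp[OF H0[THEN spec[of _ UNIV], THEN spec[of _ "blinfun_apply \<psi>"]] subspace_UNIV] lpsi] bnd] by blast
    have ld: "linear (\<lambda>x. \<psi> x - h x)" by (rule linear_sub_fun[OF lpsi lh])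
    have z: "\<psi> x - h x = 0" if "x \<in> UNIV" "\<forall>\<mu>\<in>F. \<mu> x = 0" for x
      using ha that by simp
    obtain c where c: "\<forall>x\<in>UNIV. \<psi> x - h x = (\<Sum>\<mu>\<in>F. c \<mu> * blinfun_apply \<mu> x)"
      using LA[where g="\<lambda>\<mu>. blinfun_apply \<mu>", OF F(1) lF ld subspace_UNIV z] by blast
    define \<nu> where "\<nu> = (\<Sum>\<mu>\<in>F. c \<mu> *\<^sub>R \<mu>)"
    have "\<nu> \<in> P" unfolding \<nu>_def using sP F(2) by (intro subspace_sum subspace_scale) auto
    moreover have "norm (\<psi> - \<nu>) \<le> e / 2"
    proof (rule norm_blinfun_bound)
      show "0 \<le> e / 2" using e by simp
      fix x
      have "blinfun_apply (\<psi> - \<nu>) x = \<psi> x - (\<Sum>\<mu>\<in>F. c \<mu> * blinfun_apply \<mu> x)" unfolding \<nu>_def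
        by (simp add: blinfun.diff_left blinfun.sum_left blinfun.scaleR_left)
      also have "\<dots> = h x" using c[rule_format, of x] by simp
      finally have "blinfun_apply (\<psi> - \<nu>) x = h x" .
      then show "norm (blinfun_apply (\<psi> - \<nu>) x) \<le> e / 2 * norm x" using hb by simp
    qed
    then have "dist \<nu> \<psi> < e" using e by (simp add: dist_norm norm_minus_commute)
    ultimately show ?thesis by blast
  qed
  then show ?thesis using closed_approachable[OF cP] by blast
qed

lemma dba_facts:
  fixes P :: "('a::{real_normed_algebra,banach} \<Rightarrow>\<^sub>L real) set"
  assumes "dual_banach_algebra P"
  shows "subspace P" "closed P" "\<And>\<mu> a. \<mu> \<in> P \<Longrightarrow> lact a \<mu> \<in> P" "\<And>\<mu> a. \<mu> \<in> P \<Longrightarrow> ract \<mu> a \<in> P"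
    "0 \<in> P" "P \<noteq> {}"
  using assms unfolding dual_banach_algebra_def by (auto intro: subspace_0)

lemma dba_sep:
  fixes P :: "('a::{real_normed_algebra,banach} \<Rightarrow>\<^sub>L real) set"
  assumes "dual_banach_algebra P" "\<forall>\<mu>\<in>P. \<mu> a = 0"
  shows "a = 0"
proof -
  obtain c where c: "c > 0" "\<forall>a. norm a \<le> c * Sup {\<bar>blinfun_apply \<mu> a\<bar> | \<mu>. \<mu> \<in> P \<and> norm \<mu> \<le> 1}"
    using assms(1) unfolding dual_banach_algebra_def by blast
  have "0 \<in> P" using dba_facts(5)[OF assms(1)] .
  then have "{\<bar>blinfun_apply \<mu> a\<bar> | \<mu>. \<mu> \<in> P \<and> norm \<mu> \<le> 1} = {0}" using assms(2) by force
  then have "norm a \<le> 0" using c(2)[rule_format, of a] by simp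
  then show ?thesis by simp
qed

lemma dba_surj:
  fixes P :: "('a::{real_normed_algebra,banach} \<Rightarrow>\<^sub>L real) set"
  assumes "dual_banach_algebra P"
    and "\<forall>\<mu>\<in>P. \<forall>\<nu>\<in>P. \<phi> (\<mu> + \<nu>) = \<phi> \<mu> + \<phi> \<nu>" "\<forall>\<mu>\<in>P. \<forall>c. \<phi> (c *\<^sub>R \<mu>) = c * \<phi> \<mu>"
    "\<forall>\<mu>\<in>P. \<bar>\<phi> \<mu>\<bar> \<le> C * norm \<mu>"
  shows "\<exists>a. \<forall>\<mu>\<in>P. \<phi> \<mu> = blinfun_apply \<mu> a"
proof -
  have "(\<forall>\<mu>\<in>P. \<forall>\<nu>\<in>P. \<phi> (\<mu> + \<nu>) = \<phi> \<mu> + \<phi> \<nu>) \<and>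
        (\<forall>\<mu>\<in>P. \<forall>c. \<phi> (c *\<^sub>R \<mu>) = c * \<phi> \<mu>) \<and>
        (\<exists>C. \<forall>\<mu>\<in>P. \<bar>\<phi> \<mu>\<bar> \<le> C * norm \<mu>)" using assms(2-4) by blast
  then show ?thesis using assms(1) unfolding dual_banach_algebra_def by blast
qed

definition dball :: "('a::real_normed_vector \<Rightarrow>\<^sub>L real) set \<Rightarrow> 'a set" where
  "dball P = {a. \<forall>\<mu>\<in>P. \<bar>blinfun_apply \<mu> a\<bar> \<le> norm \<mu>}"

lemma cball_dball: "cball 0 1 \<subseteq> dball P"
proof
  fix a :: 'a assume "a \<in> cball 0 1"
  then have na: "norm a \<le> 1" by simp
  show "a \<in> dball P" unfolding dball_def
  proof (intro CollectI ballI)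
    fix \<mu> assume "\<mu> \<in> P"
    have "\<bar>\<mu> a\<bar> \<le> norm \<mu> * norm a" using norm_blinfun[of \<mu> a] by simp
    also have "\<dots> \<le> norm \<mu>" using na mult_left_mono[OF na norm_ge_zero[of \<mu>]] by simp
    finally show "\<bar>\<mu> a\<bar> \<le> norm \<mu>" .
  qed
qed

lemma alaoglu:
  fixes P :: "('a::{real_normed_algebra,banach} \<Rightarrow>\<^sub>L real) set"
  assumes dba: "dual_banach_algebra P"
  shows "compactin (weak_star_top P) (dball P)"
proof -
  let ?X = "product_topology (\<lambda>_. euclideanreal) P :: (('a \<Rightarrow>\<^sub>L real) \<Rightarrow> real) topology"
  have sP: "subspace P" and P0: "0 \<in> P" and Pne: "P \<noteq> {}" using dba_facts[OF dba] by auto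
  define I0 where "I0 = (\<Pi>\<^sub>E \<mu>\<in>P. {-norm \<mu>..norm \<mu>})"
  have cI0: "compactin ?X I0" unfolding I0_def compactin_PiE by simp
  have hX: "Hausdorff_space ?X" by (simp add: Hausdorff_space_product_topology)
  have clI0: "closedin ?X I0" by (rule compactin_imp_closedin[OF hX cI0])
  define Sx where "Sx \<mu> \<nu> c = {\<phi> \<in> topspace ?X. \<phi> (\<mu> + c *\<^sub>R \<nu>) = \<phi> \<mu> + c * \<phi> \<nu>}" for \<mu> \<nu> c
  define Fam where "Fam = {Sx \<mu> \<nu> c | \<mu> \<nu> c. \<mu> \<in> P \<and> \<nu> \<in> P}"
  define Lin where "Lin = \<Inter> Fam"
  have clLin: "closedin ?X Lin" unfolding Lin_def
  proof (rule closedin_Inter)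
    have "Sx 0 0 0 \<in> Fam" unfolding Fam_def using P0 by blast
    then show "Fam \<noteq> {}" by blast
  next
    fix S assume "S \<in> Fam"
    then obtain \<mu> \<nu> c where mnc: "\<mu> \<in> P" "\<nu> \<in> P" and S0: "S = Sx \<mu> \<nu> c"
      unfolding Fam_def by blast
    have S: "S = {\<phi> \<in> topspace ?X. \<phi> (\<mu> + c *\<^sub>R \<nu>) = \<phi> \<mu> + c * \<phi> \<nu>}" unfolding S0 Sx_def ..
    have m: "\<mu> + c *\<^sub>R \<nu> \<in> P" using sP mnc by (intro subspace_add subspace_scale) auto
    show "closedin ?X S" unfolding S
    proof (rule closedin_continuous_maps_eq[OF Hausdorff_space_euclidean])
      show "continuous_map ?X euclideanreal (\<lambda>\<phi>. \<phi> (\<mu> + c *\<^sub>R \<nu>))"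
        by (rule continuous_map_product_projection[OF m])
      show "continuous_map ?X euclideanreal (\<lambda>\<phi>. \<phi> \<mu> + c * \<phi> \<nu>)"
        by (intro continuous_map_add continuous_map_real_mult_left continuous_map_product_projection mnc)
    qed
  qed
  define C where "C = I0 \<inter> Lin"
  have clC: "closedin ?X C" unfolding C_def by (rule closedin_Int[OF clI0 clLin])
  have cC: "compactin ?X C" by (rule closed_compactin[OF cI0 _ clC]) (simp add: C_def)
  have CX: "C \<subseteq> topspace ?X" using clC closedin_subset by blast
  have lin: "\<phi> (\<mu> + c *\<^sub>R \<nu>) = \<phi> \<mu> + c * \<phi> \<nu>" if "\<phi> \<in> C" "\<mu> \<in> P" "\<nu> \<in> P" for \<phi> \<mu> \<nu> c
  proof -
    have "Sx \<mu> \<nu> c \<in> Fam" unfolding Fam_def using that(2,3) by blast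
    then have "\<phi> \<in> Sx \<mu> \<nu> c" using that(1) unfolding C_def Lin_def by blast
    then show ?thesis unfolding Sx_def by blast
  qed
  have ex: "\<exists>a. \<forall>\<mu>\<in>P. \<phi> \<mu> = blinfun_apply \<mu> a" if \<phi>: "\<phi> \<in> C" for \<phi>
  proof (rule dba_surj[OF dba])
    have z: "\<phi> 0 = 0" using lin[OF \<phi> P0 P0, of 1] by simp
    show "\<forall>\<mu>\<in>P. \<forall>\<nu>\<in>P. \<phi> (\<mu> + \<nu>) = \<phi> \<mu> + \<phi> \<nu>" using lin[OF \<phi>, of _ _ 1] by simp
    show "\<forall>\<mu>\<in>P. \<forall>c. \<phi> (c *\<^sub>R \<mu>) = c * \<phi> \<mu>" using lin[OF \<phi> P0] z by simp
    show "\<forall>\<mu>\<in>P. \<bar>\<phi> \<mu>\<bar> \<le> 1 * norm \<mu>" using \<phi> unfolding C_def I0_def by (auto simp: PiE_iff abs_le_iff)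
  qed
  define g where "g \<phi> = (SOME a. \<forall>\<mu>\<in>P. \<phi> \<mu> = blinfun_apply \<mu> a)" for \<phi>
  have gspec: "\<forall>\<mu>\<in>P. \<phi> \<mu> = blinfun_apply \<mu> (g \<phi>)" if "\<phi> \<in> C" for \<phi>
    unfolding g_def using someI_ex[OF ex[OF that]] .
  have tsC: "topspace (subtopology ?X C) = C" using CX by auto
  have gcont: "continuous_map (subtopology ?X C) (weak_star_top P) g"
    unfolding weak_star_wtop
  proof (rule wtop_cont_into)
    show "blinfun_apply ` P \<noteq> {}" using Pne by blast
  next
    fix f assume "f \<in> blinfun_apply ` P"
    then obtain \<mu> where \<mu>: "\<mu> \<in> P" "f = blinfun_apply \<mu>" by blast
    have "continuous_map (subtopology ?X C) euclideanreal (\<lambda>\<phi>. \<phi> \<mu>)"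
      by (rule continuous_map_from_subtopology[OF continuous_map_product_projection[OF \<mu>(1)]])
    then show "continuous_map (subtopology ?X C) euclideanreal (f \<circ> g)"
      by (rule continuous_map_eq) (use gspec \<mu> tsC in auto)
  qed
  have "compactin (subtopology ?X C) C" using cC by (simp add: compactin_subtopology)
  then have cg: "compactin (weak_star_top P) (g ` C)" by (rule image_compactin[OF _ gcont])
  have "g ` C = dball P"
  proof
    show "g ` C \<subseteq> dball P"
    proof
      fix a assume "a \<in> g ` C"
      then obtain \<phi> where \<phi>: "\<phi> \<in> C" "a = g \<phi>" by blast
      have "\<forall>\<mu>\<in>P. \<phi> \<mu> \<in> {-norm \<mu>..norm \<mu>}" using \<phi>(1) unfolding C_def I0_def by (auto simp: PiE_iff)
      then show "a \<in> dball P" unfolding dball_def using gspec[OF \<phi>(1)] \<phi>(2) by (auto simp: abs_le_iff)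
    qed
  next
    show "dball P \<subseteq> g ` C"
    proof
      fix a assume a: "a \<in> dball P"
      define \<phi> where "\<phi> = restrict (\<lambda>\<mu>. blinfun_apply \<mu> a) P"
      have "\<phi> \<in> I0" unfolding \<phi>_def I0_def using a unfolding dball_def by (auto simp: PiE_iff abs_le_iff)
      moreover have "\<phi> \<in> Lin" unfolding Lin_def
      proof
        fix S assume "S \<in> Fam"
        then obtain \<mu> \<nu> c where mnc: "\<mu> \<in> P" "\<nu> \<in> P" and S0: "S = Sx \<mu> \<nu> c"
          unfolding Fam_def by blast
        have S: "S = {\<phi> \<in> topspace ?X. \<phi> (\<mu> + c *\<^sub>R \<nu>) = \<phi> \<mu> + c * \<phi> \<nu>}" unfolding S0 Sx_def ..
        have m: "\<mu> + c *\<^sub>R \<nu> \<in> P" using sP mnc by (intro subspace_add subspace_scale) auto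
        have "\<phi> \<in> topspace ?X" unfolding \<phi>_def topspace_product_topology by simp
        moreover have "\<phi> (\<mu> + c *\<^sub>R \<nu>) = \<phi> \<mu> + c * \<phi> \<nu>"
          unfolding \<phi>_def using m mnc by (simp add: blinfun.add_left blinfun.scaleR_left)
        ultimately show "\<phi> \<in> S" unfolding S by blast
      qed
      ultimately have \<phi>C: "\<phi> \<in> C" unfolding C_def by blast
      have "\<forall>\<mu>\<in>P. blinfun_apply \<mu> (g \<phi> - a) = 0"
        using gspec[OF \<phi>C] unfolding \<phi>_def by (simp add: blinfun.diff_right)
      then have "g \<phi> - a = 0" by (rule dba_sep[OF dba])
      then have "a = g \<phi>" by simp
      then show "a \<in> g ` C" using \<phi>C by blast
    qed
  qed
  then show ?thesis using cg by simp
qed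

lemma cont_eps:
  fixes P :: "('a::real_normed_vector \<Rightarrow>\<^sub>L real) set"
  assumes cont: "continuous_map (subtopology (weak_star_top P) B) euclideanreal f"
    and B0: "0 \<in> B" and f0: "f 0 = 0" and Pne: "P \<noteq> {}" and e: "e > 0"
  shows "\<exists>F. finite F \<and> F \<subseteq> P \<and> (\<exists>d>0. \<forall>a\<in>B. (\<forall>\<mu>\<in>F. \<bar>blinfun_apply \<mu> a\<bar> < d) \<longrightarrow> \<bar>f a\<bar> < e)"
proof -
  have ne: "blinfun_apply ` P \<noteq> {}" using Pne by blast
  have ts: "topspace (weak_star_top P) = UNIV" unfolding weak_star_wtop using wtop_topspace[OF ne] .
  have "openin (subtopology (weak_star_top P) B) {a \<in> topspace (subtopology (weak_star_top P) B). f a \<in> ball 0 e}"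
    by (rule openin_continuous_map_preimage[OF cont]) simp
  moreover have "{a \<in> topspace (subtopology (weak_star_top P) B). f a \<in> ball 0 e} = {a \<in> B. \<bar>f a\<bar> < e}"
    unfolding topspace_subtopology ts by (auto simp: dist_real_def)
  ultimately have "openin (subtopology (weak_star_top P) B) {a \<in> B. \<bar>f a\<bar> < e}" by simp
  then obtain V where V: "openin (weak_star_top P) V" "{a \<in> B. \<bar>f a\<bar> < e} = V \<inter> B"
    unfolding openin_subtopology by blast
  have "0 \<in> {a \<in> B. \<bar>f a\<bar> < e}" using B0 f0 e by simp
  then have "0 \<in> V" unfolding V(2) by blast
  have "\<exists>G. finite G \<and> G \<subseteq> blinfun_apply ` P \<and> (\<exists>d>0. \<forall>y. (\<forall>g\<in>G. \<bar>g y - g 0\<bar> < d) \<longrightarrow> y \<in> V)"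
    by (rule wtop_nhd[OF V(1)[unfolded weak_star_wtop] \<open>0 \<in> V\<close>])
  then obtain G d where G: "finite G" "G \<subseteq> blinfun_apply ` P" "d > 0"
      "\<forall>y. (\<forall>g\<in>G. \<bar>g y - g 0\<bar> < d) \<longrightarrow> y \<in> V"
    by (elim exE conjE) simp
  obtain F where F: "F \<subseteq> P" "finite F" "G = blinfun_apply ` F"
    using finite_subset_image[OF G(1,2)] by blast
  have "\<forall>a\<in>B. (\<forall>\<mu>\<in>F. \<bar>blinfun_apply \<mu> a\<bar> < d) \<longrightarrow> \<bar>f a\<bar> < e"
  proof (intro ballI impI)
    fix a assume aB: "a \<in> B" and H: "\<forall>\<mu>\<in>F. \<bar>blinfun_apply \<mu> a\<bar> < d"
    have "\<forall>g\<in>G. \<bar>g a - g 0\<bar> < d" using H unfolding F(3) by (simp add: blinfun.zero_right)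
    then have "a \<in> V" using G(4) by blast
    then have "a \<in> {a \<in> B. \<bar>f a\<bar> < e}" using V(2) aB by blast
    then show "\<bar>f a\<bar> < e" by simp
  qed
  then show ?thesis using F G(3) by blast
qed

lemma psi_in_P:
  fixes P :: "('a::{real_normed_algebra,banach} \<Rightarrow>\<^sub>L real) set"
  assumes dba: "dual_banach_algebra P" and bl: "bounded_linear f"
    and cont: "continuous_map (subtopology (weak_star_top P) (cball 0 1)) euclideanreal f"
  shows "Blinfun f \<in> P"
proof (rule BD)
  show "subspace P" "closed P" using dba_facts[OF dba] by auto
  fix e :: real assume e: "e > 0"
  have f0: "f 0 = 0" by (rule linear_0[OF bounded_linear.linear[OF bl]])
  have "\<exists>F. finite F \<and> F \<subseteq> P \<and> (\<exists>d>0. \<forall>a\<in>cball 0 1. (\<forall>\<mu>\<in>F. \<bar>blinfun_apply \<mu> a\<bar> < d) \<longrightarrow> \<bar>f a\<bar> < e)"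
    by (rule cont_eps[OF cont _ f0 dba_facts(6)[OF dba] e]) simp
  then obtain F d where F: "finite F" "F \<subseteq> P" "d > 0"
    and Fd: "\<forall>a\<in>cball 0 1. (\<forall>\<mu>\<in>F. \<bar>blinfun_apply \<mu> a\<bar> < d) \<longrightarrow> \<bar>f a\<bar> < e"
    by (elim exE conjE) simp
  have "\<forall>a. norm a \<le> 1 \<longrightarrow> (\<forall>\<mu>\<in>F. \<bar>blinfun_apply \<mu> a\<bar> < d) \<longrightarrow> \<bar>blinfun_apply (Blinfun f) a\<bar> < e"
    using Fd unfolding bounded_linear_Blinfun_apply[OF bl] by simp
  then show "\<exists>F. finite F \<and> F \<subseteq> P \<and> (\<exists>d>0. \<forall>a. norm a \<le> 1 \<longrightarrow> (\<forall>\<mu>\<in>F. \<bar>blinfun_apply \<mu> a\<bar> < d) \<longrightarrow> \<bar>blinfun_apply (Blinfun f) a\<bar> < e)"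
    using F by blast
qed

lemma weak_top_ts: "topspace (weak_top :: 'x::real_normed_vector topology) = UNIV"
  unfolding weak_top_wtop by (rule wtop_topspace) simp

lemma weak_star_ts:
  assumes "P \<noteq> {}" shows "topspace (weak_star_top P) = UNIV"
  unfolding weak_star_wtop by (rule wtop_topspace) (use assms in simp)

lemma weak_top_cont_blinfun: "continuous_map weak_top euclideanreal (blinfun_apply \<Phi>)"
  unfolding weak_top_wtop by (rule wtop_cont) simp

lemma weak_top_cont_bl: "bounded_linear g \<Longrightarrow> continuous_map weak_top euclideanreal g"
  using weak_top_cont_blinfun[of "Blinfun g"] by (simp add: bounded_linear_Blinfun_apply)

lemma weak_star_cont: "\<mu> \<in> P \<Longrightarrow> continuous_map (weak_star_top P) euclideanreal (blinfun_apply \<mu>)"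
  unfolding weak_star_wtop by (rule wtop_cont) simp

lemma conv1:
  fixes P :: "('a::{real_normed_algebra,banach} \<Rightarrow>\<^sub>L real) set" and S :: "'a \<Rightarrow> 'e::real_normed_vector"
  assumes dba: "dual_banach_algebra P" and bl: "bounded_linear S"
    and cont: "continuous_map (weak_star_top P) weak_top S"
  shows "Blinfun (\<lambda>a. blinfun_apply \<Phi> (S a)) \<in> P"
proof (rule psi_in_P[OF dba])
  show "bounded_linear (\<lambda>a. blinfun_apply \<Phi> (S a))"
    using bounded_linear_compose[OF blinfun.bounded_linear_right bl] .
  have "continuous_map (weak_star_top P) euclideanreal (blinfun_apply \<Phi> \<circ> S)"
    by (rule continuous_map_compose[OF cont weak_top_cont_blinfun])
  then show "continuous_map (subtopology (weak_star_top P) (cball 0 1)) euclideanreal (\<lambda>a. blinfun_apply \<Phi> (S a))"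
    by (simp add: continuous_map_from_subtopology o_def)
qed

lemma conv2:
  fixes P :: "('a::{real_normed_algebra,banach} \<Rightarrow>\<^sub>L real) set" and S :: "'a \<Rightarrow> 'e::real_normed_vector"
  assumes dba: "dual_banach_algebra P"
    and cont: "continuous_map (weak_star_top P) weak_top S"
    and H: "Hausdorff_space (weak_top :: 'e topology)"
  shows "weakly_compact_map S"
  unfolding weakly_compact_map_def
proof -
  have cK: "compactin weak_top (S ` dball P)" by (rule image_compactin[OF alaoglu[OF dba] cont])
  have "closedin weak_top (S ` dball P)" by (rule compactin_imp_closedin[OF H cK])
  moreover have "S ` cball 0 1 \<subseteq> S ` dball P" using cball_dball by blast
  ultimately have "weak_top closure_of (S ` cball 0 1) \<subseteq> S ` dball P" by (rule closure_of_minimal[rotated])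
  then show "compactin weak_top (weak_top closure_of (S ` cball 0 1))"
    by (rule closed_compactin[OF cK _ closedin_closure_of])
qed

lemma key:
  fixes P :: "('a::{real_normed_algebra,banach} \<Rightarrow>\<^sub>L real) set" and S :: "'a \<Rightarrow> 'e::real_normed_vector"
    and G0 :: "('e \<Rightarrow> real) set"
  assumes dba: "dual_banach_algebra P" and bl: "bounded_linear S"
    and G0ne: "G0 \<noteq> {}" and G0bl: "\<And>g. g \<in> G0 \<Longrightarrow> bounded_linear g"
    and HG0: "Hausdorff_space (wtop G0)"
    and G0P: "\<And>g. g \<in> G0 \<Longrightarrow> Blinfun (\<lambda>a. g (S a)) \<in> P"
    and wc: "weakly_compact_map S"
  shows "continuous_map (weak_star_top P) weak_top S"
proof -
  define K where "K = weak_top closure_of (S ` cball 0 1)"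
  have cK: "compactin weak_top K" using wc unfolding weakly_compact_map_def K_def .
  have clK: "closedin weak_top K" unfolding K_def by (rule closedin_closure_of)
  have SK: "S ` cball 0 1 \<subseteq> K" unfolding K_def by (rule closure_of_subset) (simp add: weak_top_ts)
  have Pne: "P \<noteq> {}" using dba_facts(6)[OF dba] .
  have tsW: "topspace (weak_star_top P) = UNIV" by (rule weak_star_ts[OF Pne])
  have tsG: "topspace (wtop G0) = UNIV" by (rule wtop_topspace[OF G0ne])
  have gS: "continuous_map (weak_star_top P) euclideanreal (g \<circ> S)" if "g \<in> G0" for g
  proof -
    have "continuous_map (weak_star_top P) euclideanreal (blinfun_apply (Blinfun (\<lambda>a. g (S a))))"
      by (rule weak_star_cont[OF G0P[OF that]])
    moreover have "blinfun_apply (Blinfun (\<lambda>a. g (S a))) = g \<circ> S"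
      using bounded_linear_compose[OF G0bl[OF that] bl] by (simp add: bounded_linear_Blinfun_apply o_def)
    ultimately show ?thesis by simp
  qed
  have c1: "continuous_map (subtopology (weak_star_top P) (cball 0 1)) (subtopology (wtop G0) K) S"
    unfolding continuous_map_in_subtopology
  proof
    show "continuous_map (subtopology (weak_star_top P) (cball 0 1)) (wtop G0) S"
      by (rule continuous_map_from_subtopology[OF wtop_cont_into[OF G0ne gS]])
    show "S \<in> topspace (subtopology (weak_star_top P) (cball 0 1)) \<rightarrow> K" using SK tsW by auto
  qed
  have idc: "continuous_map weak_top (wtop G0) id"
    by (rule wtop_cont_into[OF G0ne]) (simp add: weak_top_cont_bl G0bl)
  have c2: "continuous_map (subtopology (wtop G0) K) (subtopology weak_top K) id"
    unfolding continuous_map_closedin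
  proof (intro conjI allI impI)
    show "id \<in> topspace (subtopology (wtop G0) K) \<rightarrow> topspace (subtopology weak_top K)"
      using tsG weak_top_ts by auto
    fix C assume "closedin (subtopology weak_top K) C"
    then obtain T where T: "closedin weak_top T" "C = T \<inter> K" unfolding closedin_subtopology by blast
    have clC: "closedin weak_top C" unfolding T(2) by (rule closedin_Int[OF T(1) clK])
    have cC: "compactin weak_top C" by (rule closed_compactin[OF cK _ clC]) (simp add: T(2))
    have "compactin (wtop G0) (id ` C)" by (rule image_compactin[OF cC idc])
    then have "closedin (wtop G0) C" using compactin_imp_closedin[OF HG0] by simp
    moreover have "{x \<in> topspace (subtopology (wtop G0) K). id x \<in> C} = C \<inter> K" using tsG by auto
    ultimately show "closedin (subtopology (wtop G0) K) {x \<in> topspace (subtopology (wtop G0) K). id x \<in> C}"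
      unfolding closedin_subtopology by auto
  qed
  show ?thesis
    unfolding weak_top_wtop
  proof (rule wtop_cont_into)
    show "range blinfun_apply \<noteq> {}" by simp
    fix f assume "f \<in> range (blinfun_apply :: ('e \<Rightarrow>\<^sub>L real) \<Rightarrow> _)"
    then obtain \<Phi> where \<Phi>: "f = blinfun_apply \<Phi>" by blast
    have c3: "continuous_map (subtopology weak_top K) euclideanreal (blinfun_apply \<Phi>)"
      by (rule continuous_map_from_subtopology[OF weak_top_cont_blinfun])
    have "continuous_map (subtopology (weak_star_top P) (cball 0 1)) euclideanreal (blinfun_apply \<Phi> \<circ> (id \<circ> S))"
      by (rule continuous_map_compose[OF continuous_map_compose[OF c1 c2] c3])
    then have cc: "continuous_map (subtopology (weak_star_top P) (cball 0 1)) euclideanreal (\<lambda>a. blinfun_apply \<Phi> (S a))"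
      by (simp add: o_def)
    have blf: "bounded_linear (\<lambda>a. blinfun_apply \<Phi> (S a))"
      using bounded_linear_compose[OF blinfun.bounded_linear_right bl] .
    have "Blinfun (\<lambda>a. blinfun_apply \<Phi> (S a)) \<in> P" by (rule psi_in_P[OF dba blf cc])
    then have "continuous_map (weak_star_top P) euclideanreal (blinfun_apply (Blinfun (\<lambda>a. blinfun_apply \<Phi> (S a))))"
      by (rule weak_star_cont)
    then show "continuous_map (weak_star_top P) euclideanreal (f \<circ> S)"
      unfolding \<Phi> using bounded_linear_Blinfun_apply[OF blf] by (simp add: o_def)
  qed
qed

lemma bl_eval2: "bounded_linear (\<lambda>X. blinfun_apply (blinfun_apply X b) c)"
  using bounded_linear_compose[OF blinfun.bounded_linear_left[of c] blinfun.bounded_linear_left[of b]] .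

lemma bl_evalT: "bounded_linear (\<lambda>a. blinfun_apply (blinfun_apply T a) c)"
  using bounded_linear_compose[OF blinfun.bounded_linear_left[of c] blinfun.bounded_linear_right[of T]] .

lemma ract_apply: "blinfun_apply (ract \<mu> a) b = blinfun_apply \<mu> (a * b)"
proof -
  have "bounded_linear (\<lambda>b. blinfun_apply \<mu> (a * b))"
    using bounded_linear_compose[OF blinfun.bounded_linear_right bounded_linear_mult_right] .
  then show ?thesis unfolding ract_def by (simp add: bounded_linear_Blinfun_apply)
qed

lemma lact_apply: "blinfun_apply (lact a \<mu>) b = blinfun_apply \<mu> (b * a)"
proof -
  have "bounded_linear (\<lambda>b. blinfun_apply \<mu> (b * a))"
    using bounded_linear_compose[OF blinfun.bounded_linear_right bounded_linear_mult_left] .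
  then show ?thesis unfolding lact_def by (simp add: bounded_linear_Blinfun_apply)
qed

lemma blact_apply: "blinfun_apply (blact a T) c = blinfun_apply T (c * a)"
proof -
  have "bounded_linear (\<lambda>c. blinfun_apply T (c * a))"
    using bounded_linear_compose[OF blinfun.bounded_linear_right bounded_linear_mult_left] .
  then show ?thesis unfolding blact_def by (simp add: bounded_linear_Blinfun_apply)
qed

lemma norm_ract: "norm (ract \<mu> a) \<le> norm \<mu> * norm (a::'a::real_normed_algebra)"
proof (rule norm_blinfun_bound)
  show "0 \<le> norm \<mu> * norm a" by simp
  fix b
  have "norm (blinfun_apply (ract \<mu> a) b) \<le> norm \<mu> * norm (a * b)"
    unfolding ract_apply by (rule norm_blinfun)
  also have "\<dots> \<le> norm \<mu> * (norm a * norm b)"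
    by (rule mult_left_mono[OF norm_mult_ineq norm_ge_zero])
  finally show "norm (blinfun_apply (ract \<mu> a) b) \<le> norm \<mu> * norm a * norm b" by (simp add: mult.assoc)
qed

lemma ract_bl: "bounded_linear (\<lambda>\<mu>. ract \<mu> (a::'a::real_normed_algebra))"
proof (rule bounded_linear_intro[where K="norm a"])
  fix \<mu> \<nu> :: "'a \<Rightarrow>\<^sub>L real"
  show "ract (\<mu> + \<nu>) a = ract \<mu> a + ract \<nu> a"
    by (rule blinfun_eqI) (simp add: ract_apply blinfun.add_left)
next
  fix r and \<mu> :: "'a \<Rightarrow>\<^sub>L real"
  show "ract (r *\<^sub>R \<mu>) a = r *\<^sub>R ract \<mu> a"
    by (rule blinfun_eqI) (simp add: ract_apply blinfun.scaleR_left)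
next
  fix \<mu> :: "'a \<Rightarrow>\<^sub>L real"
  show "norm (ract \<mu> a) \<le> norm \<mu> * norm a"
  proof (rule norm_blinfun_bound)
    show "0 \<le> norm \<mu> * norm a" by simp
    fix b
    have "norm (blinfun_apply (ract \<mu> a) b) \<le> norm \<mu> * norm (a * b)"
      unfolding ract_apply by (rule norm_blinfun)
    also have "\<dots> \<le> norm \<mu> * (norm a * norm b)"
      by (rule mult_left_mono[OF norm_mult_ineq norm_ge_zero])
    finally show "norm (blinfun_apply (ract \<mu> a) b) \<le> norm \<mu> * norm a * norm b" by (simp add: mult.assoc)
  qed
qed

lemma bract_apply: "blinfun_apply (bract T a) c = ract (blinfun_apply T c) a"
proof -
  have "bounded_linear (\<lambda>c. ract (blinfun_apply T c) a)"
    using bounded_linear_compose[OF ract_bl blinfun.bounded_linear_right] .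
  then show ?thesis unfolding bract_def by (simp add: bounded_linear_Blinfun_apply)
qed

lemma blact_bl: "bounded_linear (\<lambda>a. blact a (T :: 'a::real_normed_algebra \<Rightarrow>\<^sub>L ('a \<Rightarrow>\<^sub>L real)))"
proof (rule bounded_linear_intro[where K="norm T"])
  fix x y :: 'a
  show "blact (x + y) T = blact x T + blact y T"
    by (rule blinfun_eqI) (simp add: blact_apply distrib_left blinfun.add_right blinfun.add_left)
next
  fix r and x :: 'a
  show "blact (r *\<^sub>R x) T = r *\<^sub>R blact x T"
    by (rule blinfun_eqI) (simp add: blact_apply blinfun.scaleR_right blinfun.scaleR_left)
next
  fix x :: 'a
  show "norm (blact x T) \<le> norm x * norm T"
  proof (rule norm_blinfun_bound)
    show "0 \<le> norm x * norm T" by simp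
    fix c
    have "norm (blinfun_apply (blact x T) c) \<le> norm T * norm (c * x)"
      unfolding blact_apply by (rule norm_blinfun)
    also have "\<dots> \<le> norm T * (norm c * norm x)"
      by (rule mult_left_mono[OF norm_mult_ineq norm_ge_zero])
    finally show "norm (blinfun_apply (blact x T) c) \<le> norm x * norm T * norm c" by (simp add: mult_ac)
  qed
qed

lemma bract_bl: "bounded_linear (\<lambda>a. bract (T :: 'a::real_normed_algebra \<Rightarrow>\<^sub>L ('a \<Rightarrow>\<^sub>L real)) a)"
proof (rule bounded_linear_intro[where K="norm T"])
  fix x y :: 'a
  show "bract T (x + y) = bract T x + bract T y"
    by (intro blinfun_eqI) (simp add: bract_apply ract_apply distrib_right blinfun.add_right blinfun.add_left)
next
  fix r and x :: 'a
  show "bract T (r *\<^sub>R x) = r *\<^sub>R bract T x"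
    by (intro blinfun_eqI) (simp add: bract_apply ract_apply blinfun.scaleR_right blinfun.scaleR_left)
next
  fix x :: 'a
  show "norm (bract T x) \<le> norm x * norm T"
  proof (rule norm_blinfun_bound)
    show "0 \<le> norm x * norm T" by simp
    fix c
    have "norm (blinfun_apply (bract T x) c) \<le> norm (blinfun_apply T c) * norm x"
      unfolding bract_apply by (rule norm_ract)
    also have "\<dots> \<le> (norm T * norm c) * norm x"
      by (rule mult_right_mono[OF norm_blinfun norm_ge_zero])
    finally show "norm (blinfun_apply (bract T x) c) \<le> norm x * norm T * norm c" by (simp add: mult_ac)
  qed
qed

definition G0 :: "(('a::real_normed_vector \<Rightarrow>\<^sub>L ('a \<Rightarrow>\<^sub>L real)) \<Rightarrow> real) set" where
  "G0 = {(\<lambda>X. blinfun_apply (blinfun_apply X b) c) | b c. True}"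

definition G1 :: "(('a::real_normed_vector \<Rightarrow>\<^sub>L real) \<Rightarrow> real) set" where
  "G1 = {(\<lambda>\<mu>. blinfun_apply \<mu> b) | b. True}"

lemma G0_ne: "G0 \<noteq> {}" unfolding G0_def by blast
lemma G1_ne: "G1 \<noteq> {}" unfolding G1_def by blast

lemma G0_bl: "g \<in> G0 \<Longrightarrow> bounded_linear g"
proof -
  assume "g \<in> G0"
  then obtain b c where "g = (\<lambda>X. blinfun_apply (blinfun_apply X b) c)" unfolding G0_def by blast
  then show ?thesis using bl_eval2 by simp
qed
lemma G1_bl: "g \<in> G1 \<Longrightarrow> bounded_linear g"
proof -
  assume "g \<in> G1"
  then obtain b where "g = (\<lambda>\<mu>. blinfun_apply \<mu> b)" unfolding G1_def by blast
  then show ?thesis by simp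
qed

lemma G0_H: "Hausdorff_space (wtop (G0 :: (('a::real_normed_vector \<Rightarrow>\<^sub>L ('a \<Rightarrow>\<^sub>L real)) \<Rightarrow> real) set))"
proof (rule wtop_Hausdorff)
  fix X Y :: "'a \<Rightarrow>\<^sub>L ('a \<Rightarrow>\<^sub>L real)"
  assume ne: "X \<noteq> Y"
  show "\<exists>f\<in>G0. f X \<noteq> f Y"
  proof (rule ccontr)
    assume "\<not> (\<exists>f\<in>G0. f X \<noteq> f Y)"
    then have "\<forall>b c. blinfun_apply (blinfun_apply X b) c = blinfun_apply (blinfun_apply Y b) c"
      unfolding G0_def by (smt (verit) mem_Collect_eq)
    then have "blinfun_apply X b = blinfun_apply Y b" for b by (intro blinfun_eqI) simp
    then have "X = Y" by (rule blinfun_eqI)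
    then show False using ne by simp
  qed
qed

lemma G1_H: "Hausdorff_space (wtop (G1 :: (('a::real_normed_vector \<Rightarrow>\<^sub>L real) \<Rightarrow> real) set))"
proof (rule wtop_Hausdorff)
  fix X Y :: "'a \<Rightarrow>\<^sub>L real"
  assume ne: "X \<noteq> Y"
  show "\<exists>f\<in>G1. f X \<noteq> f Y"
  proof (rule ccontr)
    assume "\<not> (\<exists>f\<in>G1. f X \<noteq> f Y)"
    then have "\<forall>b. blinfun_apply X b = blinfun_apply Y b"
      unfolding G1_def by (smt (verit) mem_Collect_eq)
    then have "X = Y" by (intro blinfun_eqI) simp
    then show False using ne by simp
  qed
qed

lemma weak_H:
  fixes G :: "('x::real_normed_vector \<Rightarrow> real) set"
  assumes "G \<noteq> {}" "\<And>g. g \<in> G \<Longrightarrow> bounded_linear g" "Hausdorff_space (wtop G)"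
  shows "Hausdorff_space (weak_top :: 'x topology)"
proof (rule Hausdorff_space_expansive[OF assms(3)])
  show "topspace (wtop G) = topspace weak_top" by (simp add: wtop_topspace[OF assms(1)] weak_top_ts)
  have sub: "G \<subseteq> range blinfun_apply"
  proof
    fix g assume "g \<in> G"
    then have "g = blinfun_apply (Blinfun g)" using assms(2) by (simp add: bounded_linear_Blinfun_apply)
    then show "g \<in> range blinfun_apply" by blast
  qed
  fix U assume "openin (wtop G) U"
  then show "openin weak_top U" unfolding weak_top_wtop by (rule wtop_coarser[OF sub assms(1)])
qed

lemma HE: "Hausdorff_space (weak_top :: ('a::real_normed_vector \<Rightarrow>\<^sub>L ('a \<Rightarrow>\<^sub>L real)) topology)"
  by (rule weak_H[OF G0_ne G0_bl G0_H])

lemma HA: "Hausdorff_space (weak_top :: ('a::real_normed_vector \<Rightarrow>\<^sub>L real) topology)"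
  by (rule weak_H[OF G1_ne G1_bl G1_H])

theorem corollary3p4:
  fixes P :: "('a::{real_normed_algebra_1,banach} \<Rightarrow>\<^sub>L real) set"
    and T :: "'a \<Rightarrow>\<^sub>L ('a \<Rightarrow>\<^sub>L real)"
  assumes "dual_banach_algebra P"
  shows "(sigmaWC P T \<longleftrightarrow>
           ((\<forall>a. blinfun_apply T a \<in> P) \<and>
            (\<forall>b. Blinfun (\<lambda>a. blinfun_apply (blinfun_apply T a) b) \<in> P) \<and>
            WAP T))
         \<and> (sigmaWC P T \<longrightarrow> weakly_compact_map (blinfun_apply T))"
proof -
  note dba = assms
  have e1: "blinfun_apply (blinfun_apply (blact a T) b) c = blinfun_apply (blinfun_apply T (b * a)) c" for a b c
    by (simp add: blact_apply)
  have e2: "blinfun_apply (blinfun_apply (bract T a) b) c = blinfun_apply (blinfun_apply T b) (a * c)" for a b c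
    by (simp add: bract_apply ract_apply)
  have fwd: "(\<forall>a. blinfun_apply T a \<in> P) \<and>
            (\<forall>b. Blinfun (\<lambda>a. blinfun_apply (blinfun_apply T a) b) \<in> P) \<and>
            WAP T \<and> weakly_compact_map (blinfun_apply T)"
    if sw: "sigmaWC P T"
  proof -
    have c1: "continuous_map (weak_star_top P) weak_top (\<lambda>a. blact a T)"
      and c2: "continuous_map (weak_star_top P) weak_top (\<lambda>a. bract T a)"
      using sw unfolding sigmaWC_def by auto
    have A: "blinfun_apply T b \<in> P" for b
    proof -
      have "Blinfun (\<lambda>a. blinfun_apply (Blinfun (\<lambda>X. blinfun_apply (blinfun_apply X b) 1)) (bract T a)) \<in> P"
        by (rule conv1[OF dba bract_bl c2])
      moreover have "(\<lambda>a. blinfun_apply (Blinfun (\<lambda>X. blinfun_apply (blinfun_apply X b) 1)) (bract T a))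
          = blinfun_apply (blinfun_apply T b)"
        by (rule ext) (simp add: bounded_linear_Blinfun_apply[OF bl_eval2] e2)
      ultimately show ?thesis by (simp add: blinfun_apply_inverse)
    qed
    have B: "Blinfun (\<lambda>a. blinfun_apply (blinfun_apply T a) b) \<in> P" for b
    proof -
      have "Blinfun (\<lambda>a. blinfun_apply (Blinfun (\<lambda>X. blinfun_apply (blinfun_apply X 1) b)) (blact a T)) \<in> P"
        by (rule conv1[OF dba blact_bl c1])
      moreover have "(\<lambda>a. blinfun_apply (Blinfun (\<lambda>X. blinfun_apply (blinfun_apply X 1) b)) (blact a T))
          = (\<lambda>a. blinfun_apply (blinfun_apply T a) b)"
        by (rule ext) (simp add: bounded_linear_Blinfun_apply[OF bl_eval2] e1)
      ultimately show ?thesis by simp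
    qed
    have W: "WAP T" unfolding WAP_def
      using conv2[OF dba c1 HE] conv2[OF dba c2 HE] by simp
    have c3: "continuous_map (weak_star_top P) weak_top (blinfun_apply T)"
      unfolding weak_top_wtop
    proof (rule wtop_cont_into)
      show "range blinfun_apply \<noteq> {}" by simp
      fix f assume "f \<in> range (blinfun_apply :: (('a \<Rightarrow>\<^sub>L real) \<Rightarrow>\<^sub>L real) \<Rightarrow> _)"
      then obtain \<phi> where \<phi>: "f = blinfun_apply \<phi>" by blast
      have blp: "bounded_linear (\<lambda>X. blinfun_apply \<phi> (blinfun_apply X 1))"
        using bounded_linear_compose[OF blinfun.bounded_linear_right blinfun.bounded_linear_left] .
      have "continuous_map (weak_star_top P) euclideanreal
          (blinfun_apply (Blinfun (\<lambda>X. blinfun_apply \<phi> (blinfun_apply X 1))) \<circ> (\<lambda>a. blact a T))"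
        by (rule continuous_map_compose[OF c1 weak_top_cont_blinfun])
      then show "continuous_map (weak_star_top P) euclideanreal (f \<circ> blinfun_apply T)"
        by (rule continuous_map_eq) (simp add: \<phi> bounded_linear_Blinfun_apply[OF blp] blact_apply)
    qed
    have "weakly_compact_map (blinfun_apply T)" by (rule conv2[OF dba c3 HA])
    then show ?thesis using A B W by blast
  qed
  have bwd: "sigmaWC P T"
    if A: "\<forall>a. blinfun_apply T a \<in> P" and B: "\<forall>b. Blinfun (\<lambda>a. blinfun_apply (blinfun_apply T a) b) \<in> P"
      and W: "WAP T"
  proof -
    have w1: "weakly_compact_map (\<lambda>a. blact a T)" and w2: "weakly_compact_map (\<lambda>a. bract T a)"
      using W unfolding WAP_def by auto
    have c1: "continuous_map (weak_star_top P) weak_top (\<lambda>a. blact a T)"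
    proof (rule key[OF dba blact_bl G0_ne G0_bl G0_H _ w1])
      fix g :: "('a \<Rightarrow>\<^sub>L ('a \<Rightarrow>\<^sub>L real)) \<Rightarrow> real" assume "g \<in> G0"
      then obtain b c where g: "g = (\<lambda>X. blinfun_apply (blinfun_apply X b) c)" unfolding G0_def by blast
      define \<nu> where "\<nu> = Blinfun (\<lambda>a. blinfun_apply (blinfun_apply T a) c)"
      have "ract \<nu> b \<in> P" unfolding \<nu>_def using dba_facts(4)[OF dba B[rule_format, of c]] .
      moreover have "ract \<nu> b = Blinfun (\<lambda>a. g (blact a T))"
        unfolding ract_def \<nu>_def g by (simp add: bounded_linear_Blinfun_apply[OF bl_evalT] e1)
      ultimately show "Blinfun (\<lambda>a. g (blact a T)) \<in> P" by simp
    qed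
    have c2: "continuous_map (weak_star_top P) weak_top (\<lambda>a. bract T a)"
    proof (rule key[OF dba bract_bl G0_ne G0_bl G0_H _ w2])
      fix g :: "('a \<Rightarrow>\<^sub>L ('a \<Rightarrow>\<^sub>L real)) \<Rightarrow> real" assume "g \<in> G0"
      then obtain b c where g: "g = (\<lambda>X. blinfun_apply (blinfun_apply X b) c)" unfolding G0_def by blast
      have "lact c (blinfun_apply T b) \<in> P" using dba_facts(3)[OF dba A[rule_format, of b]] .
      moreover have "lact c (blinfun_apply T b) = Blinfun (\<lambda>a. g (bract T a))"
        unfolding lact_def g by (simp add: e2)
      ultimately show "Blinfun (\<lambda>a. g (bract T a)) \<in> P" by simp
    qed
    show ?thesis unfolding sigmaWC_def using c1 c2 by simp
  qed
  show ?thesis using fwd bwd by blast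
qed

end
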